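(* Let $p\in(1,\infty)$. The space $X_p^{1,\omega}$ does not admit an equivalent asymptotically uniformly smooth norm.
   Context: Define $X^{1,0}_p=\mathbb R$ and inductively $X^{1,k}_p=\mathbb R\oplus_1\ell_p(X^{1,k-1}_p)$ (the $\ell_1$-direct sum of $\mathbb R$ with the $\ell_p$-sum of countably many copies of $X^{1,k-1}_p$), and $X^{1,\omega}_p=(\bigoplus_{k=0}^\infty X^{1,k}_p)_{\ell_p}$. For a Banach space $X$ the modulus of asymptotic uniform smoothness is $\bar\rho_X(t)=\sup_{x\in S_X}\inf_{Y}\sup_{y\in S_Y}\|x+ty\|-1$, the infimum over closed finite-codimensional subspaces $Y$; $X$ is asymptotically uniformly smooth if $\lim_{t\to0^+}\bar\rho_X(t)/t=0$. *)

theory Defs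
  imports "HOL-Analysis.Analysis"
begin

text \<open>Elements of X^{1,k}_p are coded as real functions on finite sequences of naturals
 (nat list): the coordinate [] is the R-summand, the coordinates n#s belong to the n-th
 copy of X^{1,k-1}_p in the l_p-sum.  Coordinates of length > k are zero.\<close>

fun inX :: "real \<Rightarrow> nat \<Rightarrow> (nat list \<Rightarrow> real) \<Rightarrow> bool"
and Xnorm :: "real \<Rightarrow> nat \<Rightarrow> (nat list \<Rightarrow> real) \<Rightarrow> real" where
  "inX p 0 f = (\<forall>s. s \<noteq> [] \<longrightarrow> f s = 0)"
| "inX p (Suc k) f = ((\<forall>n. inX p k (\<lambda>s. f (n # s)))
      \<and> summable (\<lambda>n. Xnorm p k (\<lambda>s. f (n # s)) powr p))"
| "Xnorm p 0 f = \<bar>f []\<bar>"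
| "Xnorm p (Suc k) f = \<bar>f []\<bar> + (\<Sum>n. Xnorm p k (\<lambda>s. f (n # s)) powr p) powr (1 / p)"

text \<open>X^{1,omega}_p = l_p-sum over k of X^{1,k}_p; the k-th component is x k.\<close>

definition Xw :: "real \<Rightarrow> (nat \<Rightarrow> nat list \<Rightarrow> real) set" where
  "Xw p = {x. (\<forall>k. inX p k (x k)) \<and> summable (\<lambda>k. Xnorm p k (x k) powr p)}"

definition Xwnorm :: "real \<Rightarrow> (nat \<Rightarrow> nat list \<Rightarrow> real) \<Rightarrow> real" where
  "Xwnorm p x = (\<Sum>k. Xnorm p k (x k) powr p) powr (1 / p)"

definition vadd :: "(nat \<Rightarrow> nat list \<Rightarrow> real) \<Rightarrow> (nat \<Rightarrow> nat list \<Rightarrow> real) \<Rightarrow> (nat \<Rightarrow> nat list \<Rightarrow> real)" where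
  "vadd x y = (\<lambda>k s. x k s + y k s)"

definition vscale :: "real \<Rightarrow> (nat \<Rightarrow> nat list \<Rightarrow> real) \<Rightarrow> (nat \<Rightarrow> nat list \<Rightarrow> real)" where
  "vscale a x = (\<lambda>k s. a * x k s)"

definition vsub :: "(nat \<Rightarrow> nat list \<Rightarrow> real) \<Rightarrow> (nat \<Rightarrow> nat list \<Rightarrow> real) \<Rightarrow> (nat \<Rightarrow> nat list \<Rightarrow> real)" where
  "vsub x y = (\<lambda>k s. x k s - y k s)"

definition equiv_norm :: "real \<Rightarrow> ((nat \<Rightarrow> nat list \<Rightarrow> real) \<Rightarrow> real) \<Rightarrow> bool" where
  "equiv_norm p N \<longleftrightarrow>
     (\<forall>x\<in>Xw p. \<forall>y\<in>Xw p. N (vadd x y) \<le> N x + N y)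
   \<and> (\<forall>a. \<forall>x\<in>Xw p. N (vscale a x) = \<bar>a\<bar> * N x)
   \<and> (\<exists>c C. 0 < c \<and> 0 < C \<and> (\<forall>x\<in>Xw p. c * Xwnorm p x \<le> N x \<and> N x \<le> C * Xwnorm p x))"

definition fincodim_subspace :: "real \<Rightarrow> ((nat \<Rightarrow> nat list \<Rightarrow> real) \<Rightarrow> real)
    \<Rightarrow> (nat \<Rightarrow> nat list \<Rightarrow> real) set \<Rightarrow> bool" where
  "fincodim_subspace p N Y \<longleftrightarrow>
     Y \<subseteq> Xw p \<and> (\<lambda>k s. 0) \<in> Y
   \<and> (\<forall>x\<in>Y. \<forall>y\<in>Y. vadd x y \<in> Y)
   \<and> (\<forall>a. \<forall>x\<in>Y. vscale a x \<in> Y)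
   \<and> (\<forall>u v. (\<forall>n. u n \<in> Y) \<and> v \<in> Xw p \<and> (\<lambda>n. N (vsub (u n) v)) \<longlonglongrightarrow> 0 \<longrightarrow> v \<in> Y)
   \<and> (\<exists>B. finite B \<and> B \<subseteq> Xw p \<and>
        (\<forall>v\<in>Xw p. \<exists>y\<in>Y. \<exists>c. v = (\<lambda>k s. y k s + (\<Sum>b\<in>B. c b * b k s))))"

definition aus_modulus :: "real \<Rightarrow> ((nat \<Rightarrow> nat list \<Rightarrow> real) \<Rightarrow> real) \<Rightarrow> real \<Rightarrow> real" where
  "aus_modulus p N t =
     (SUP x\<in>{x\<in>Xw p. N x = 1}.
        INF Y\<in>{Y. fincodim_subspace p N Y}.
          SUP y\<in>{y\<in>Y. N y = 1}. N (vadd x (vscale t y)) - 1)"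

definition AUS :: "real \<Rightarrow> ((nat \<Rightarrow> nat list \<Rightarrow> real) \<Rightarrow> real) \<Rightarrow> bool" where
  "AUS p N \<longleftrightarrow> ((\<lambda>t. aus_modulus p N t / t) \<longlongrightarrow> 0) (at_right 0)"

end

theory Submission
  imports Defs
begin

lemma pow_convex_pt:
  fixes p u v lm :: real
  assumes p: "1 \<le> p" and u: "0 \<le> u" and v: "0 \<le> v" and lm: "0 \<le> lm" "lm \<le> 1"
  shows "(lm * u + (1-lm) * v) powr p \<le> lm * u powr p + (1-lm) * v powr p"
proof (cases "u = 0 \<or> v = 0")
  case True
  have key: "(m * w) powr p \<le> m * w powr p" if "0 \<le> m" "m \<le> 1" "0 \<le> w" for m w :: real
  proof -
    have "m powr p \<le> m powr 1" using powr_mono'[of 1 p m] p that by simp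
    then have "m powr p \<le> m" using that by simp
    then show ?thesis using that by (simp add: powr_mult mult_right_mono)
  qed
  show ?thesis
  proof (cases "u = 0")
    case True
    then show ?thesis using key[of "1-lm" v] lm v by simp
  next
    case False
    then have "v = 0" using \<open>u = 0 \<or> v = 0\<close> by simp
    then show ?thesis using key[of lm u] lm u by simp
  qed
next
  case False
  then have "u \<in> {0<..}" "v \<in> {0<..}" using u v by auto
  from convex_onD[OF powr_convex[OF p], of lm v u, OF lm this(2) this(1)]
  show ?thesis by (simp add: algebra_simps)
qed

lemma mink:
  fixes a b c :: "nat \<Rightarrow> real" and p :: real
  assumes p: "1 \<le> p" and a0: "\<And>n. 0 \<le> a n" and b0: "\<And>n. 0 \<le> b n"
    and c0: "\<And>n. 0 \<le> c n" and cab: "\<And>n. c n \<le> a n + b n"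
    and sa: "summable (\<lambda>n. a n powr p)" and sb: "summable (\<lambda>n. b n powr p)"
  shows "summable (\<lambda>n. c n powr p) \<and>
    (\<Sum>n. c n powr p) powr (1/p) \<le> (\<Sum>n. a n powr p) powr (1/p) + (\<Sum>n. b n powr p) powr (1/p)"
proof -
  define SA where "SA = (\<Sum>n. a n powr p)"
  define SB where "SB = (\<Sum>n. b n powr p)"
  define A where "A = SA powr (1/p)"
  define B where "B = SB powr (1/p)"
  have SA0: "0 \<le> SA" unfolding SA_def by (rule suminf_nonneg[OF sa]) simp
  have SB0: "0 \<le> SB" unfolding SB_def by (rule suminf_nonneg[OF sb]) simp
  have pne: "p \<noteq> 0" using p by simp
  have SAA: "SA = A powr p" unfolding A_def using SA0 pne by (simp add: powr_powr)
  have SBB: "SB = B powr p" unfolding B_def using SB0 pne by (simp add: powr_powr)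
  have A0: "0 \<le> A" "0 \<le> B" unfolding A_def B_def by simp_all
  have gen: "summable (\<lambda>n. c n powr p) \<and> (\<Sum>n. c n powr p) powr (1/p) \<le> A + B"
    if z: "\<And>n. a n = 0" and sb: "summable (\<lambda>n. b n powr p)" and B_def: "B = (\<Sum>n. b n powr p) powr (1/p)"
      and A0: "0 \<le> A" and cab: "\<And>n. c n \<le> a n + b n"
    for a b A B
  proof -
    have le: "c n powr p \<le> b n powr p" for n using cab[of n] z[of n] c0[of n] p
      by (intro powr_mono2) auto
    have s: "summable (\<lambda>n. c n powr p)"
      by (rule summable_comparison_test[OF _ sb]) (use le in auto)
    have "(\<Sum>n. c n powr p) \<le> (\<Sum>n. b n powr p)" by (rule suminf_le[OF le s sb])
    then have "(\<Sum>n. c n powr p) powr (1/p) \<le> B" unfolding B_def using p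
      by (intro powr_mono2) (auto intro: suminf_nonneg[OF s])
    then show ?thesis using s A0 by simp
  qed
  show ?thesis
  proof (cases "A = 0 \<or> B = 0")
    case True
    show ?thesis
    proof (cases "A = 0")
      case True
      then have "SA = 0" using SAA by simp
      then have "\<forall>n. a n powr p = 0" unfolding SA_def using suminf_eq_zero_iff[OF sa] by simp
      then have "\<And>n. a n = 0" by simp
      have "B = (\<Sum>n. b n powr p) powr (1/p)" unfolding B_def SB_def ..
      from gen[of a b B A, OF \<open>\<And>n. a n = 0\<close> sb this A0(1) cab] show ?thesis
        using True unfolding A_def B_def SB_def SA_def by simp
    next
      case False
      then have "B = 0" using \<open>A = 0 \<or> B = 0\<close> by simp
      then have "SB = 0" using SBB by simp
      then have "\<forall>n. b n powr p = 0" unfolding SB_def using suminf_eq_zero_iff[OF sb] by simp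
      then have "\<And>n. b n = 0" by simp
      have "A = (\<Sum>n. a n powr p) powr (1/p)" unfolding A_def SA_def ..
      from gen[of b a A B, OF \<open>\<And>n. b n = 0\<close> sa this A0(2)] cab show ?thesis
        using \<open>B = 0\<close> unfolding A_def B_def SB_def SA_def by (simp add: add.commute)
    qed
  next
    case False
    then have Ap: "0 < A" and Bp: "0 < B" using A0 by auto
    have SAp: "0 < SA" using SAA Ap by simp
    have SBp: "0 < SB" using SBB Bp by simp
    define lm where "lm = A / (A + B)"
    have lm: "0 \<le> lm" "lm \<le> 1" unfolding lm_def using Ap Bp by auto
    define K1 where "K1 = (A+B) powr p * lm / SA"
    define K2 where "K2 = (A+B) powr p * (1-lm) / SB"
    have pt: "c n powr p \<le> K1 * a n powr p + K2 * b n powr p" for n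
    proof -
      have eq: "a n + b n = (A+B) * (lm * (a n / A) + (1-lm) * (b n / B))"
      proof -
        have "1 - lm = B / (A+B)" unfolding lm_def using Ap Bp by (simp add: field_simps)
        then have e2: "(1-lm) * (b n / B) = b n / (A+B)" using Bp by simp
        have e1: "lm * (a n / A) = a n / (A+B)" unfolding lm_def using Ap by simp
        have "lm * (a n / A) + (1-lm) * (b n / B) = (a n + b n) / (A+B)"
          unfolding e1 e2 by (simp add: add_divide_distrib)
        then show ?thesis using Ap Bp by simp
      qed
      have "c n powr p \<le> (a n + b n) powr p" using cab[of n] c0[of n] p by (intro powr_mono2) auto
      also have "\<dots> = (A+B) powr p * (lm * (a n / A) + (1-lm) * (b n / B)) powr p"
        by (subst eq) (simp add: powr_mult)
      also have "\<dots> \<le> (A+B) powr p * (lm * (a n / A) powr p + (1-lm) * (b n / B) powr p)"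
        by (intro mult_left_mono pow_convex_pt p lm) (use a0 b0 Ap Bp in auto)
      also have "\<dots> = K1 * a n powr p + K2 * b n powr p"
        unfolding K1_def K2_def SAA SBB by (simp add: powr_divide field_simps)
      finally show ?thesis .
    qed
    have s2: "summable (\<lambda>n. K1 * a n powr p + K2 * b n powr p)"
      by (intro summable_add summable_mult sa sb)
    have s: "summable (\<lambda>n. c n powr p)"
      by (rule summable_comparison_test[OF _ s2]) (use pt in auto)
    have "(\<Sum>n. c n powr p) \<le> (\<Sum>n. K1 * a n powr p + K2 * b n powr p)"
      by (rule suminf_le[OF pt s s2])
    also have "\<dots> = K1 * SA + K2 * SB" unfolding SA_def SB_def
      by (simp add: suminf_add[OF summable_mult[OF sa] summable_mult[OF sb], symmetric] suminf_mult sa sb)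
    also have "\<dots> = (A+B) powr p" unfolding K1_def K2_def using SAp SBp by (simp add: field_simps)
    finally have "(\<Sum>n. c n powr p) powr (1/p) \<le> ((A+B) powr p) powr (1/p)" using p
      by (intro powr_mono2) (auto intro: suminf_nonneg[OF s])
    also have "\<dots> = A + B" using pne Ap Bp by (simp add: powr_powr)
    finally show ?thesis using s unfolding A_def B_def SA_def SB_def by simp
  qed
qed

lemma Xnorm_nonneg: "0 \<le> Xnorm p k f"
  by (cases k) auto

lemma X_zero: "inX p k (\<lambda>s. 0) \<and> Xnorm p k (\<lambda>s. 0) = 0"
  by (induction k) auto

lemma X_scale:
  assumes p: "0 < p"
  shows "inX p k f \<Longrightarrow> inX p k (\<lambda>s. a * f s) \<and> Xnorm p k (\<lambda>s. a * f s) = \<bar>a\<bar> * Xnorm p k f"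
proof (induction k arbitrary: f)
  case 0
  then show ?case by (simp add: abs_mult)
next
  case (Suc k)
  have ch: "inX p k (\<lambda>s. a * f (n # s)) \<and> Xnorm p k (\<lambda>s. a * f (n # s)) = \<bar>a\<bar> * Xnorm p k (\<lambda>s. f (n # s))" for n
    using Suc.IH[of "\<lambda>s. f (n # s)"] Suc.prems by simp
  have sm: "summable (\<lambda>n. Xnorm p k (\<lambda>s. f (n # s)) powr p)" using Suc.prems by simp
  have eq: "(\<lambda>n. Xnorm p k (\<lambda>s. a * f (n # s)) powr p) = (\<lambda>n. \<bar>a\<bar> powr p * Xnorm p k (\<lambda>s. f (n # s)) powr p)"
    using ch by (simp add: powr_mult)
  have "(\<Sum>n. \<bar>a\<bar> powr p * Xnorm p k (\<lambda>s. f (n # s)) powr p) = \<bar>a\<bar> powr p * (\<Sum>n. Xnorm p k (\<lambda>s. f (n # s)) powr p)"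
    by (rule suminf_mult[OF sm])
  moreover have "(\<bar>a\<bar> powr p) powr (1/p) = \<bar>a\<bar>" using p by (simp add: powr_powr)
  ultimately show ?case using ch sm eq Suc.prems by (simp add: summable_mult powr_mult abs_mult distrib_left)
qed

lemma X_add:
  assumes p: "1 \<le> p"
  shows "inX p k f \<Longrightarrow> inX p k g \<Longrightarrow> inX p k (\<lambda>s. f s + g s) \<and>
     Xnorm p k (\<lambda>s. f s + g s) \<le> Xnorm p k f + Xnorm p k g"
proof (induction k arbitrary: f g)
  case 0
  then show ?case by simp
next
  case (Suc k)
  have ch: "inX p k (\<lambda>s. f (n # s) + g (n # s)) \<and> Xnorm p k (\<lambda>s. f (n # s) + g (n # s))
      \<le> Xnorm p k (\<lambda>s. f (n # s)) + Xnorm p k (\<lambda>s. g (n # s))" for n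
    using Suc.IH[of "\<lambda>s. f (n # s)" "\<lambda>s. g (n # s)"] Suc.prems by simp
  have M: "summable (\<lambda>n. Xnorm p k (\<lambda>s. f (n # s) + g (n # s)) powr p) \<and>
    (\<Sum>n. Xnorm p k (\<lambda>s. f (n # s) + g (n # s)) powr p) powr (1/p) \<le>
    (\<Sum>n. Xnorm p k (\<lambda>s. f (n # s)) powr p) powr (1/p) + (\<Sum>n. Xnorm p k (\<lambda>s. g (n # s)) powr p) powr (1/p)"
    by (rule mink[OF p]) (use ch Suc.prems in \<open>auto simp: Xnorm_nonneg\<close>)
  have "\<bar>f [] + g []\<bar> \<le> \<bar>f []\<bar> + \<bar>g []\<bar>" by (rule abs_triangle_ineq)
  then show ?case using ch M by simp
qed

lemma Xw_add:
  assumes p: "1 \<le> p" and x: "x \<in> Xw p" and y: "y \<in> Xw p"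
  shows "vadd x y \<in> Xw p"
proof -
  have ch: "inX p k (vadd x y k) \<and> Xnorm p k (vadd x y k) \<le> Xnorm p k (x k) + Xnorm p k (y k)" for k
    using X_add[OF p, of k "x k" "y k"] x y unfolding Xw_def vadd_def by auto
  have "summable (\<lambda>k. Xnorm p k (vadd x y k) powr p)"
    using mink[OF p, of "\<lambda>k. Xnorm p k (x k)" "\<lambda>k. Xnorm p k (y k)" "\<lambda>k. Xnorm p k (vadd x y k)"]
      ch x y unfolding Xw_def by (auto simp: Xnorm_nonneg)
  then show ?thesis using ch unfolding Xw_def by auto
qed

lemma Xw_scale:
  assumes p: "0 < p" and x: "x \<in> Xw p"
  shows "vscale a x \<in> Xw p"
proof -
  have ch: "inX p k (vscale a x k) \<and> Xnorm p k (vscale a x k) = \<bar>a\<bar> * Xnorm p k (x k)" for k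
    using X_scale[OF p, of k "x k" a] x unfolding Xw_def vscale_def by auto
  have "summable (\<lambda>k. \<bar>a\<bar> powr p * Xnorm p k (x k) powr p)"
    using x unfolding Xw_def by (auto intro: summable_mult)
  then have "summable (\<lambda>k. Xnorm p k (vscale a x k) powr p)" using ch by (simp add: powr_mult)
  then show ?thesis using ch unfolding Xw_def by auto
qed

lemma Xwnorm_nonneg: "0 \<le> Xwnorm p x" unfolding Xwnorm_def by simp

fun tv :: "(nat \<Rightarrow> real) \<Rightarrow> (nat \<Rightarrow> nat \<Rightarrow> real) \<Rightarrow> nat list \<Rightarrow> real" where
  "tv T a [] = T 0"
| "tv T a (n # s) = a 0 n * tv (\<lambda>i. T (Suc i)) (\<lambda>l. a (Suc l)) s"

lemma tv_closed: "tv T a s = T (length s) * (\<Prod>l<length s. a l (s ! l))"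
proof (induction s arbitrary: T a)
  case Nil
  then show ?case by simp
next
  case (Cons n s)
  then show ?case by (simp add: prod.lessThan_Suc_shift del: prod.lessThan_Suc)
qed

definition normd :: "real \<Rightarrow> (nat \<Rightarrow> real) \<Rightarrow> bool" where
  "normd p b \<longleftrightarrow> summable (\<lambda>n. \<bar>b n\<bar> powr p) \<and> (\<Sum>n. \<bar>b n\<bar> powr p) = 1"

lemma tv_norm:
  assumes p: "0 < p"
  shows "(\<forall>i>k. T i = 0) \<Longrightarrow> (\<forall>l. normd p (a l)) \<Longrightarrow>
    inX p k (tv T a) \<and> Xnorm p k (tv T a) = (\<Sum>i\<le>k. \<bar>T i\<bar>)"
proof (induction k arbitrary: T a)
  case 0
  then show ?case by (auto simp: tv_closed neq_Nil_conv)
next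
  case (Suc k)
  define T' where "T' = (\<lambda>i. T (Suc i))"
  define a' where "a' = (\<lambda>l. a (Suc l))"
  have IH: "inX p k (tv T' a') \<and> Xnorm p k (tv T' a') = (\<Sum>i\<le>k. \<bar>T' i\<bar>)"
    using Suc.IH[of T' a'] Suc.prems unfolding T'_def a'_def by auto
  define X' where "X' = Xnorm p k (tv T' a')"
  have X0: "0 \<le> X'" unfolding X'_def by (rule Xnorm_nonneg)
  have ch: "(\<lambda>s. tv T a (n # s)) = (\<lambda>s. a 0 n * tv T' a' s)" for n
    unfolding T'_def a'_def by simp
  have chn: "inX p k (\<lambda>s. tv T a (n # s)) \<and> Xnorm p k (\<lambda>s. tv T a (n # s)) = \<bar>a 0 n\<bar> * X'" for n
    unfolding ch X'_def using X_scale[OF p, of k "tv T' a'" "a 0 n"] IH by simp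
  have n0: "normd p (a 0)" using Suc.prems by simp
  have eqf: "(\<lambda>n. Xnorm p k (\<lambda>s. tv T a (n # s)) powr p) = (\<lambda>n. X' powr p * \<bar>a 0 n\<bar> powr p)"
    using chn by (simp add: powr_mult mult.commute)
  have sm: "summable (\<lambda>n. X' powr p * \<bar>a 0 n\<bar> powr p)"
    using n0 unfolding normd_def by (intro summable_mult) simp
  have su: "(\<Sum>n. X' powr p * \<bar>a 0 n\<bar> powr p) = X' powr p"
    using n0 unfolding normd_def by (simp add: suminf_mult)
  have r: "(X' powr p) powr (1/p) = X'" using p X0 by (simp add: powr_powr)
  have "(\<Sum>i\<le>Suc k. \<bar>T i\<bar>) = \<bar>T 0\<bar> + (\<Sum>i\<le>k. \<bar>T' i\<bar>)"
    unfolding T'_def by (simp add: sum.atMost_Suc_shift del: sum.atMost_Suc)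
  then show ?case using chn eqf sm su r IH unfolding X'_def by simp
qed

definition emb :: "nat \<Rightarrow> (nat list \<Rightarrow> real) \<Rightarrow> (nat \<Rightarrow> nat list \<Rightarrow> real)" where
  "emb K f = (\<lambda>k. if k = K then f else (\<lambda>s. 0))"

lemma emb_Xw:
  assumes p: "0 < p" and f: "inX p K f"
  shows "emb K f \<in> Xw p \<and> Xwnorm p (emb K f) = Xnorm p K f"
proof -
  have eq: "(\<lambda>k. Xnorm p k (emb K f k) powr p) = (\<lambda>k. if k = K then Xnorm p k f powr p else 0)"
    unfolding emb_def using X_zero by (auto intro!: ext)
  have sums: "(\<lambda>k. Xnorm p k (emb K f k) powr p) sums (Xnorm p K f powr p)"
    unfolding eq by (rule sums_single)
  have inx: "inX p k (emb K f k)" for k unfolding emb_def using f X_zero by auto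
  have "(Xnorm p K f powr p) powr (1/p) = Xnorm p K f" using p Xnorm_nonneg[of p K f] by (simp add: powr_powr)
  then show ?thesis using sums inx unfolding Xw_def Xwnorm_def by (auto simp: sums_iff)
qed

lemma gauss:
  fixes c :: "'b \<Rightarrow> 'i \<Rightarrow> real"
  assumes "finite B"
  shows "finite I \<Longrightarrow> card B < card I \<Longrightarrow>
    \<exists>w. (\<exists>i\<in>I. w i \<noteq> 0) \<and> (\<forall>\<beta>\<in>B. (\<Sum>i\<in>I. w i * c \<beta> i) = 0)"
  using assms
proof (induction B arbitrary: I c rule: finite_induct)
  case empty
  then have "I \<noteq> {}" by auto
  then show ?case by (rule_tac x="\<lambda>_. 1" in exI) auto
next
  case (insert \<beta> B)
  show ?case
  proof (cases "\<forall>i\<in>I. c \<beta> i = 0")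
    case True
    from insert.IH[of I c] insert.prems insert.hyps obtain w where
      w: "\<exists>i\<in>I. w i \<noteq> 0" "\<forall>\<gamma>\<in>B. (\<Sum>i\<in>I. w i * c \<gamma> i) = 0" by auto
    then show ?thesis using True by (rule_tac x=w in exI) auto
  next
    case False
    then obtain i0 where i0: "i0 \<in> I" "c \<beta> i0 \<noteq> 0" by auto
    define I' where "I' = I - {i0}"
    define c' where "c' = (\<lambda>\<gamma> i. c \<gamma> i - c \<gamma> i0 * c \<beta> i / c \<beta> i0)"
    have fI': "finite I'" using insert.prems unfolding I'_def by simp
    have cI': "card B < card I'" using insert.prems insert.hyps i0 unfolding I'_def by simp
    from insert.IH[OF fI' cI', of c'] obtain w' where
      w': "\<exists>i\<in>I'. w' i \<noteq> 0" "\<forall>\<gamma>\<in>B. (\<Sum>i\<in>I'. w' i * c' \<gamma> i) = 0" by auto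
    define w where "w = (\<lambda>i. if i = i0 then - (\<Sum>j\<in>I'. w' j * c \<beta> j) / c \<beta> i0 else w' i)"
    have split: "(\<Sum>i\<in>I. w i * c \<gamma> i) = w i0 * c \<gamma> i0 + (\<Sum>i\<in>I'. w' i * c \<gamma> i)" for \<gamma>
    proof -
      have "(\<Sum>i\<in>I. w i * c \<gamma> i) = w i0 * c \<gamma> i0 + (\<Sum>i\<in>I'. w i * c \<gamma> i)"
        unfolding I'_def using i0 insert.prems by (simp add: sum.remove)
      also have "(\<Sum>i\<in>I'. w i * c \<gamma> i) = (\<Sum>i\<in>I'. w' i * c \<gamma> i)"
        unfolding I'_def w_def by (rule sum.cong) auto
      finally show ?thesis .
    qed
    have e1: "(\<Sum>i\<in>I. w i * c \<beta> i) = 0" unfolding split using i0 by (simp add: w_def)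
    have e2: "(\<Sum>i\<in>I. w i * c \<gamma> i) = 0" if g: "\<gamma> \<in> B" for \<gamma>
    proof -
      have "(\<Sum>i\<in>I'. w' i * c' \<gamma> i) = (\<Sum>i\<in>I'. w' i * c \<gamma> i) - c \<gamma> i0 / c \<beta> i0 * (\<Sum>i\<in>I'. w' i * c \<beta> i)"
        unfolding c'_def by (simp add: right_diff_distrib sum_subtractf sum_distrib_left algebra_simps)
      then have "(\<Sum>i\<in>I'. w' i * c \<gamma> i) - c \<gamma> i0 / c \<beta> i0 * (\<Sum>i\<in>I'. w' i * c \<beta> i) = 0"
        using w'(2) g by simp
      then show ?thesis unfolding split using i0 by (simp add: w_def algebra_simps)
    qed
    have "\<exists>i\<in>I. w i \<noteq> 0" using w'(1) unfolding w_def I'_def by auto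
    then show ?thesis using e1 e2 by (rule_tac x=w in exI) auto
  qed
qed

lemma Y_lincomb:
  assumes Y: "fincodim_subspace p N Y" and fin: "finite I"
  shows "(\<forall>m\<in>I. y m \<in> Y) \<Longrightarrow> (\<lambda>k s. \<Sum>m\<in>I. w m * y m k s) \<in> Y"
  using fin
proof (induction I rule: finite_induct)
  case empty
  then show ?case using Y unfolding fincodim_subspace_def by simp
next
  case (insert i I)
  have a: "vscale (w i) (y i) \<in> Y" using Y insert.prems unfolding fincodim_subspace_def by auto
  have b: "(\<lambda>k s. \<Sum>m\<in>I. w m * y m k s) \<in> Y" using insert by auto
  have "vadd (vscale (w i) (y i)) (\<lambda>k s. \<Sum>m\<in>I. w m * y m k s) \<in> Y"
    using Y a b unfolding fincodim_subspace_def by blast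
  moreover have "vadd (vscale (w i) (y i)) (\<lambda>k s. \<Sum>m\<in>I. w m * y m k s) = (\<lambda>k s. \<Sum>m\<in>insert i I. w m * y m k s)"
    unfolding vadd_def vscale_def using insert.hyps by simp
  ultimately show ?case by simp
qed

lemma tv_lin: "tv (\<lambda>i. if i = Suc j then 1 else 0) (a(j:=b)) s =
   (if length s = Suc j then (\<Prod>l<j. a l (s!l)) * b (s!j) else 0)"
  by (auto simp: tv_closed intro!: prod.cong)

lemma normd_unit: "normd p (\<lambda>n. if n = m then 1 else 0)"
proof -
  have "(\<lambda>n. \<bar>if n = m then 1 else 0\<bar> powr p) = (\<lambda>n. if n = m then (\<lambda>_. 1::real) n else 0)"
    by auto
  moreover have "(\<lambda>n. if n = m then (\<lambda>_. 1::real) n else 0) sums 1" using sums_single[of m "\<lambda>_. 1::real"] by simp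
  ultimately show ?thesis unfolding normd_def by (simp add: sums_iff)
qed

lemma find_in_Y:
  assumes p: "1 < p" and Y: "fincodim_subspace p N Y" and jK: "j < K" and a: "\<forall>l. normd p (a l)"
  shows "\<exists>b. normd p b \<and> emb K (tv (\<lambda>i. if i = Suc j then 1 else 0) (a(j:=b))) \<in> Y"
proof -
  define \<delta> where "\<delta> = (\<lambda>i::nat. if i = Suc j then 1 else (0::real))"
  obtain B where B: "finite B" "B \<subseteq> Xw p"
    and dec: "\<forall>v\<in>Xw p. \<exists>y\<in>Y. \<exists>c. v = (\<lambda>k s. y k s + (\<Sum>b\<in>B. c b * b k s))"
    using Y unfolding fincodim_subspace_def by blast
  define M where "M = card B"
  define e where "e = (\<lambda>m n::nat. if n = m then 1 else (0::real))"
  define G where "G = (\<lambda>m. emb K (tv \<delta> (a(j:=e m))))"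
  have GX: "G m \<in> Xw p" for m
  proof -
    have "\<forall>l. normd p ((a(j:=e m)) l)" using a normd_unit[of p m] unfolding e_def by auto
    moreover have "\<forall>i>K. \<delta> i = 0" unfolding \<delta>_def using jK by auto
    ultimately have "inX p K (tv \<delta> (a(j:=e m)))" using tv_norm[of p K \<delta>] p by auto
    then show ?thesis unfolding G_def using emb_Xw p by auto
  qed
  have "\<forall>m. \<exists>y c. y \<in> Y \<and> G m = (\<lambda>k s. y k s + (\<Sum>b\<in>B. c b * b k s))"
    using dec GX by blast
  then have "\<exists>y. \<forall>m. \<exists>c. y m \<in> Y \<and> G m = (\<lambda>k s. y m k s + (\<Sum>b\<in>B. c b * b k s))"
    by (rule choice)
  then obtain y where "\<forall>m. \<exists>c. y m \<in> Y \<and> G m = (\<lambda>k s. y m k s + (\<Sum>b\<in>B. c b * b k s))" by blast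
  then have "\<exists>cc. \<forall>m. y m \<in> Y \<and> G m = (\<lambda>k s. y m k s + (\<Sum>b\<in>B. cc m b * b k s))"
    by (rule choice)
  then obtain cc where ycc': "\<forall>m. y m \<in> Y \<and> G m = (\<lambda>k s. y m k s + (\<Sum>b\<in>B. cc m b * b k s))" by blast
  then have ycc: "\<And>m. y m \<in> Y" "\<And>m. G m = (\<lambda>k s. y m k s + (\<Sum>b\<in>B. cc m b * b k s))" by auto
  have cardI: "card B < card {..M}" unfolding M_def by simp
  obtain w where w: "\<exists>i\<in>{..M}. w i \<noteq> 0" "\<forall>\<beta>\<in>B. (\<Sum>i\<in>{..M}. w i * cc i \<beta>) = 0"
    using gauss[OF B(1) _ cardI, of "\<lambda>\<beta> i. cc i \<beta>"] by auto
  define b0 where "b0 = (\<lambda>n. if n \<le> M then w n else 0)"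
  have eq1: "(\<Sum>m\<in>{..M}. w m * y m k s) = (\<Sum>m\<in>{..M}. w m * G m k s)" for k s
  proof -
    have yk: "y m k s = G m k s - (\<Sum>b\<in>B. cc m b * b k s)" for m
      using fun_cong[OF fun_cong[OF ycc(2)[of m], of k], of s] by simp
    have "(\<Sum>m\<in>{..M}. w m * (\<Sum>b\<in>B. cc m b * b k s)) = (\<Sum>b\<in>B. (\<Sum>m\<in>{..M}. w m * cc m b) * b k s)"
      by (simp add: sum_distrib_left sum_distrib_right mult.assoc) (rule sum.swap)
    also have "\<dots> = 0" using w(2) by simp
    finally show ?thesis unfolding yk by (simp add: right_diff_distrib sum_subtractf)
  qed
  have eq2: "(\<Sum>m\<in>{..M}. w m * G m k s) = emb K (tv \<delta> (a(j:=b0))) k s" for k s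
  proof (cases "k = K")
    case True
    have "(\<Sum>m\<in>{..M}. w m * e m (s!j)) = b0 (s!j)" unfolding e_def b0_def
      by (simp add: if_distrib cong: if_cong)
    moreover have "(\<Sum>m\<le>M. w m * (P * e m (s ! j))) = P * (\<Sum>m\<le>M. w m * e m (s ! j))" for P
      by (simp add: sum_distrib_left algebra_simps)
    ultimately show ?thesis using True unfolding G_def emb_def \<delta>_def tv_lin
      by simp
  next
    case False
    then show ?thesis unfolding G_def emb_def by simp
  qed
  have Z0: "emb K (tv \<delta> (a(j:=b0))) \<in> Y"
  proof -
    have "(\<lambda>k s. \<Sum>m\<in>{..M}. w m * y m k s) \<in> Y" using Y_lincomb[OF Y, of "{..M}" y w] ycc(1) by simp
    moreover have "(\<lambda>k s. \<Sum>m\<in>{..M}. w m * y m k s) = emb K (tv \<delta> (a(j:=b0)))"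
      using eq1 eq2 by (intro ext) simp
    ultimately show ?thesis by simp
  qed
  define S where "S = (\<Sum>n\<in>{..M}. \<bar>b0 n\<bar> powr p)"
  have Spos: "0 < S"
  proof -
    obtain i where i: "i \<le> M" "w i \<noteq> 0" using w(1) by auto
    have "\<bar>b0 i\<bar> powr p \<le> S" unfolding S_def by (rule member_le_sum) (use i in auto)
    moreover have "0 < \<bar>b0 i\<bar> powr p" using i unfolding b0_def by simp
    ultimately show ?thesis by linarith
  qed
  define r where "r = S powr (1/p)"
  have rpos: "0 < r" unfolding r_def using Spos by simp
  have rp: "r powr p = S" unfolding r_def using Spos p by (simp add: powr_powr)
  define b where "b = (\<lambda>n. b0 n / r)"
  have bp: "\<bar>b n\<bar> powr p = \<bar>b0 n\<bar> powr p / S" for n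
    unfolding b_def using rpos by (simp add: powr_divide rp)
  have fs: "\<And>n. n \<notin> {..M} \<Longrightarrow> \<bar>b n\<bar> powr p = 0" unfolding b_def b0_def by simp
  have "normd p b"
    unfolding normd_def
  proof
    show "summable (\<lambda>n. \<bar>b n\<bar> powr p)" by (rule summable_finite[of "{..M}"]) (use fs in auto)
    have "(\<Sum>n. \<bar>b n\<bar> powr p) = (\<Sum>n\<in>{..M}. \<bar>b n\<bar> powr p)" by (rule suminf_finite[of "{..M}"]) (use fs in auto)
    also have "\<dots> = (\<Sum>n\<in>{..M}. \<bar>b0 n\<bar> powr p) / S" by (simp add: bp sum_divide_distrib)
    also have "\<dots> = S / S" unfolding S_def ..
    finally show "(\<Sum>n. \<bar>b n\<bar> powr p) = 1" using Spos by simp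
  qed
  moreover have "emb K (tv \<delta> (a(j:=b))) = vscale (1/r) (emb K (tv \<delta> (a(j:=b0))))"
    unfolding vscale_def emb_def \<delta>_def tv_lin b_def by (intro ext) auto
  moreover have "vscale (1/r) (emb K (tv \<delta> (a(j:=b0)))) \<in> Y"
    using Y Z0 unfolding fincodim_subspace_def by blast
  ultimately show ?thesis unfolding \<delta>_def by auto
qed

lemma tv_step:
  assumes "\<forall>i>j. T i = 0"
  shows "tv (T(Suc j := \<theta>)) (a(j:=b)) s = tv T a s + \<theta> * tv (\<lambda>i. if i = Suc j then 1 else 0) (a(j:=b)) s"
proof (cases "length s = Suc j")
  case True
  then show ?thesis using assms by (simp add: tv_closed)
next
  case False
  show ?thesis
  proof (cases "length s \<le> j")
    case True
    then have "(\<Prod>l<length s. (a(j:=b)) l (s!l)) = (\<Prod>l<length s. a l (s!l))"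
      by (intro prod.cong) auto
    then show ?thesis using False by (simp add: tv_closed)
  next
    case False
    then show ?thesis using \<open>length s \<noteq> Suc j\<close> assms by (simp add: tv_closed)
  qed
qed

lemma Xw_fincodim:
  assumes p: "1 \<le> p"
  shows "fincodim_subspace p N (Xw p)"
proof -
  have z: "(\<lambda>k s. 0) \<in> Xw p" unfolding Xw_def using X_zero by simp
  show ?thesis unfolding fincodim_subspace_def
    using z Xw_add[OF p] Xw_scale[of p] p
    by (auto intro!: exI[of _ "{}"])
qed

lemma sphere_nonempty:
  assumes p: "1 < p" and E: "equiv_norm p N" and Y: "fincodim_subspace p N Y"
  shows "\<exists>y\<in>Y. N y = 1"
proof -
  obtain c C where cC: "0 < c" "0 < C" "\<forall>x\<in>Xw p. c * Xwnorm p x \<le> N x \<and> N x \<le> C * Xwnorm p x"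
    using E unfolding equiv_norm_def by blast
  have hom: "\<forall>a. \<forall>x\<in>Xw p. N (vscale a x) = \<bar>a\<bar> * N x" using E unfolding equiv_norm_def by blast
  define a where "a = (\<lambda>l::nat. \<lambda>n::nat. if n = 0 then 1 else (0::real))"
  have an: "\<forall>l. normd p (a l)" unfolding a_def using normd_unit by blast
  obtain b where b: "normd p b" and v: "emb 1 (tv (\<lambda>i. if i = Suc 0 then 1 else 0) (a(0:=b))) \<in> Y"
    using find_in_Y[OF p Y _ an, of 0] by auto
  define v where "v = emb 1 (tv (\<lambda>i. if i = Suc 0 then 1 else 0) (a(0:=b)))"
  have an': "\<forall>l. normd p ((a(0:=b)) l)" using an b by auto
  have tn: "inX p 1 (tv (\<lambda>i. if i = Suc 0 then 1 else 0) (a(0:=b))) \<and>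
      Xnorm p 1 (tv (\<lambda>i. if i = Suc 0 then 1 else 0) (a(0:=b))) = (\<Sum>i\<le>1. \<bar>if i = Suc 0 then 1 else 0\<bar>)"
    using tv_norm[of p 1 "\<lambda>i. if i = Suc 0 then 1 else 0" "a(0:=b)"] p an' by auto
  have vX: "v \<in> Xw p" and vn: "Xwnorm p v = 1" using emb_Xw[of p 1] tn p unfolding v_def by auto
  have Nv: "c \<le> N v" using cC vX vn by force
  have "vscale (1 / N v) v \<in> Y" using Y v unfolding fincodim_subspace_def v_def by blast
  moreover have "N (vscale (1 / N v) v) = 1" using hom vX Nv cC(1) by simp
  ultimately show ?thesis by blast
qed

lemma aus_extract:
  assumes p: "1 < p" and E: "equiv_norm p N" and x: "x \<in> Xw p" "N x = 1" and t: "0 < t"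
    and r: "aus_modulus p N t < r"
  shows "\<exists>Y. fincodim_subspace p N Y \<and> (\<forall>y\<in>Y. N y = 1 \<longrightarrow> N (vadd x (vscale t y)) - 1 < r)"
proof -
  obtain c C where cC: "0 < c" "0 < C" "\<forall>x\<in>Xw p. c * Xwnorm p x \<le> N x \<and> N x \<le> C * Xwnorm p x"
    using E unfolding equiv_norm_def by blast
  have hom: "\<forall>a. \<forall>x\<in>Xw p. N (vscale a x) = \<bar>a\<bar> * N x" using E unfolding equiv_norm_def by blast
  have tri: "\<forall>x\<in>Xw p. \<forall>y\<in>Xw p. N (vadd x y) \<le> N x + N y" using E unfolding equiv_norm_def by blast
  have Nnn: "0 \<le> N z" if "z \<in> Xw p" for z
  proof -
    have "0 \<le> c * Xwnorm p z" using cC(1) Xwnorm_nonneg by simp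
    then show ?thesis using cC(3) that by force
  qed
  define g where "g = (\<lambda>x' Y. SUP y\<in>{y\<in>Y. N y = 1}. N (vadd x' (vscale t y)) - 1)"
  define h where "h = (\<lambda>x'. INF Y\<in>{Y. fincodim_subspace p N Y}. g x' Y)"
  have gb: "bdd_above ((\<lambda>y. N (vadd x' (vscale t y)) - 1) ` {y\<in>Y. N y = 1}) \<and>
      (\<forall>y\<in>{y\<in>Y. N y = 1}. N (vadd x' (vscale t y)) - 1 \<le> g x' Y) \<and> -1 \<le> g x' Y \<and> g x' Y \<le> t"
    if x': "x' \<in> Xw p" "N x' = 1" and Y: "fincodim_subspace p N Y" for x' Y
  proof -
    have YX: "y \<in> Y \<Longrightarrow> vscale t y \<in> Xw p \<and> y \<in> Xw p" for y
      using Y unfolding fincodim_subspace_def by blast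
    have up: "N (vadd x' (vscale t y)) - 1 \<le> t" if "y \<in> Y" "N y = 1" for y
    proof -
      have "N (vadd x' (vscale t y)) \<le> N x' + N (vscale t y)" using tri x' YX[OF that(1)] by blast
      also have "N (vscale t y) = t" using hom YX[OF that(1)] that(2) t by simp
      finally show ?thesis using x' by simp
    qed
    have lo: "-1 \<le> N (vadd x' (vscale t y)) - 1" if "y \<in> Y" for y
      using Nnn[OF Xw_add[OF _ x'(1)]] YX[OF that] p by force
    have bdd: "bdd_above ((\<lambda>y. N (vadd x' (vscale t y)) - 1) ` {y\<in>Y. N y = 1})"
      using up by (intro bdd_aboveI[of _ t]) auto
    obtain y0 where y0: "y0 \<in> Y" "N y0 = 1" using sphere_nonempty[OF p E Y] by blast
    have ne: "{y\<in>Y. N y = 1} \<noteq> {}" using y0 by blast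
    have el: "\<forall>y\<in>{y\<in>Y. N y = 1}. N (vadd x' (vscale t y)) - 1 \<le> g x' Y"
      unfolding g_def using bdd by (auto intro: cSUP_upper)
    have "-1 \<le> g x' Y" using el lo y0 by force
    moreover have "g x' Y \<le> t" unfolding g_def using ne up by (intro cSUP_least) auto
    ultimately show ?thesis using bdd el by blast
  qed
  have XF: "Xw p \<in> {Y. fincodim_subspace p N Y}" using Xw_fincodim p by simp
  have hb: "bdd_below (g x' ` {Y. fincodim_subspace p N Y}) \<and> -1 \<le> h x' \<and> h x' \<le> t"
    if x': "x' \<in> Xw p" "N x' = 1" for x'
  proof -
    have bb: "bdd_below (g x' ` {Y. fincodim_subspace p N Y})"
      using gb[OF x'] by (intro bdd_belowI[of _ "-1"]) auto
    have "h x' \<le> g x' (Xw p)" unfolding h_def using bb XF by (rule cINF_lower)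
    moreover have "-1 \<le> h x'" unfolding h_def using XF gb[OF x'] by (intro cINF_greatest) auto
    ultimately show ?thesis using gb[OF x' XF[simplified]] bb by auto
  qed
  have am: "aus_modulus p N t = (SUP x'\<in>{x\<in>Xw p. N x = 1}. h x')"
    unfolding aus_modulus_def h_def g_def ..
  have "h x \<le> aus_modulus p N t" unfolding am
    using x hb by (intro cSUP_upper) (auto intro!: bdd_aboveI[of _ t])
  then have "h x < r" using r by simp
  then obtain Y where Y: "fincodim_subspace p N Y" "g x Y < r"
    unfolding h_def using cINF_less_iff[of "{Y. fincodim_subspace p N Y}" "g x" r] XF hb[OF x] by auto
  show ?thesis using Y gb[OF x Y(1)] by force
qed

lemma sum_first_one: "(\<Sum>i\<le>n. if i = 0 then 1 else x) = 1 + real n * (x::real)"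
  by (induction n) (auto simp: algebra_simps)

theorem corollary5p9:
  fixes p :: real
  assumes "1 < p"
  shows "\<not> (\<exists>N. equiv_norm p N \<and> AUS p N)"
proof
  assume "\<exists>N. equiv_norm p N \<and> AUS p N"
  then obtain N where E: "equiv_norm p N" and A: "AUS p N" by blast
  have p: "1 < p" by fact
  have p0: "0 < p" using p by simp
  obtain c C where cC: "0 < c" "0 < C" "\<forall>x\<in>Xw p. c * Xwnorm p x \<le> N x \<and> N x \<le> C * Xwnorm p x"
    using E unfolding equiv_norm_def by blast
  have hom: "\<forall>a. \<forall>x\<in>Xw p. N (vscale a x) = \<bar>a\<bar> * N x" using E unfolding equiv_norm_def by blast
  define \<epsilon> where "\<epsilon> = c / (2 * C)"
  have \<epsilon>0: "0 < \<epsilon>" unfolding \<epsilon>_def using cC by simp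
  have "eventually (\<lambda>t. aus_modulus p N t / t < \<epsilon>) (at_right 0)"
    using A \<epsilon>0 unfolding AUS_def by (intro order_tendstoD(2)) auto
  then obtain t0 where t0: "0 < t0" "\<And>t. 0 < t \<Longrightarrow> t < t0 \<Longrightarrow> aus_modulus p N t / t < \<epsilon>"
    unfolding eventually_at_right_field by auto
  define \<tau> where "\<tau> = c * t0 / 2"
  have \<tau>0: "0 < \<tau>" unfolding \<tau>_def using cC t0 by simp
  define J :: nat where "J = nat \<lceil>2 * C * C / (\<tau> * c)\<rceil> + 1"
  have Jbig: "2 * C * C / (\<tau> * c) < real J" unfolding J_def by linarith
  define P where "P = (\<lambda>j::nat. \<exists>T a. (\<forall>l. normd p (a l)) \<and> T 0 = 1 \<and> (\<forall>i>j. T i = 0)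
     \<and> (\<forall>i. 1 \<le> i \<and> i \<le> j \<longrightarrow> \<tau> / C \<le> T i) \<and> (\<forall>i. 0 \<le> T i)
     \<and> N (emb J (tv T a)) \<le> C + real j * \<epsilon> * \<tau>)"
  have embinfo: "emb J (tv T a) \<in> Xw p \<and> Xwnorm p (emb J (tv T a)) = (\<Sum>i\<le>J. \<bar>T i\<bar>)"
    if "\<forall>l. normd p (a l)" "\<forall>i>J. T i = 0" for T a
    using tv_norm[OF p0, of J T a] emb_Xw[OF p0, of J] that by auto
  have step: "j \<le> J \<Longrightarrow> P j" for j
  proof (induction j)
    case 0
    define T0 where "T0 = (\<lambda>i::nat. if i = 0 then (1::real) else 0)"
    define a0 where "a0 = (\<lambda>l::nat. \<lambda>n::nat. if n = 0 then 1 else (0::real))"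
    have an: "\<forall>l. normd p (a0 l)" unfolding a0_def using normd_unit by blast
    have ei: "emb J (tv T0 a0) \<in> Xw p \<and> Xwnorm p (emb J (tv T0 a0)) = 1"
      using embinfo[OF an, of T0] unfolding T0_def by simp
    then have "N (emb J (tv T0 a0)) \<le> C" using cC(3) by force
    then show ?case unfolding P_def using an by (rule_tac x=T0 in exI, rule_tac x=a0 in exI) (auto simp: T0_def)
  next
    case (Suc j)
    then have jJ: "j < J" by simp
    from Suc.IH jJ obtain T a where an: "\<forall>l. normd p (a l)" and T0: "T 0 = 1" and Tz: "\<forall>i>j. T i = 0"
      and Tb: "\<forall>i. 1 \<le> i \<and> i \<le> j \<longrightarrow> \<tau> / C \<le> T i" and Tn: "\<forall>i. 0 \<le> T i"
      and Nz: "N (emb J (tv T a)) \<le> C + real j * \<epsilon> * \<tau>"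
      unfolding P_def by auto
    define z where "z = emb J (tv T a)"
    have TzJ: "\<forall>i>J. T i = 0" using Tz jJ by auto
    have zi: "z \<in> Xw p" "Xwnorm p z = (\<Sum>i\<le>J. \<bar>T i\<bar>)" using embinfo[OF an TzJ] unfolding z_def by auto
    have "\<bar>T 0\<bar> \<le> (\<Sum>i\<le>J. \<bar>T i\<bar>)" by (rule member_le_sum) auto
    then have z1: "1 \<le> Xwnorm p z" using zi T0 by simp
    define \<nu> where "\<nu> = N z"
    have "c * Xwnorm p z \<le> \<nu>" using cC(3) zi unfolding \<nu>_def by blast
    moreover have "c \<le> c * Xwnorm p z" using z1 cC(1) by simp
    ultimately have \<nu>c: "c \<le> \<nu>" by simp
    have \<nu>0: "0 < \<nu>" using \<nu>c cC(1) by simp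
    define x where "x = vscale (1/\<nu>) z"
    have xX: "x \<in> Xw p" unfolding x_def using Xw_scale[OF p0 zi(1)] .
    have xN: "N x = 1" unfolding x_def using hom zi(1) \<nu>0 unfolding \<nu>_def by simp
    define t where "t = \<tau> / \<nu>"
    have t0': "0 < t" unfolding t_def using \<tau>0 \<nu>0 by simp
    have "t \<le> \<tau> / c" unfolding t_def using \<tau>0 \<nu>c cC(1) by (intro divide_left_mono) auto
    also have "\<tau> / c = t0 / 2" unfolding \<tau>_def using cC(1) by simp
    finally have "t < t0" using t0 by simp
    then have "aus_modulus p N t / t < \<epsilon>" using t0(2) t0' by simp
    then have "aus_modulus p N t < \<epsilon> * t" using t0' by (simp add: divide_less_eq)
    from aus_extract[OF p E xX xN t0' this] obtain Y where Y: "fincodim_subspace p N Y"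
      and Yb: "\<forall>y\<in>Y. N y = 1 \<longrightarrow> N (vadd x (vscale t y)) - 1 < \<epsilon> * t" by blast
    from find_in_Y[OF p Y jJ an] obtain b where b: "normd p b"
      and PvY: "emb J (tv (\<lambda>i. if i = Suc j then 1 else 0) (a(j:=b))) \<in> Y" by blast
    define Pv where "Pv = emb J (tv (\<lambda>i. if i = Suc j then 1 else 0) (a(j:=b)))"
    have an': "\<forall>l. normd p ((a(j:=b)) l)" using an b by auto
    have "Pv \<in> Xw p \<and> Xwnorm p Pv = (\<Sum>i\<le>J. \<bar>if i = Suc j then 1 else 0\<bar>)"
      unfolding Pv_def by (rule embinfo[OF an']) (use Suc.prems in auto)
    moreover have "(\<Sum>i\<le>J. \<bar>if i = Suc j then 1 else 0\<bar>) = (1::real)"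
      using Suc.prems by (simp add: if_distrib cong: if_cong)
    ultimately have Pvi: "Pv \<in> Xw p" "Xwnorm p Pv = 1" by auto
    define \<mu> where "\<mu> = N Pv"
    have \<mu>b: "c \<le> \<mu>" "\<mu> \<le> C" using cC(3) Pvi unfolding \<mu>_def by force+
    have \<mu>0: "0 < \<mu>" using \<mu>b cC(1) by simp
    define y where "y = vscale (1/\<mu>) Pv"
    have yY: "y \<in> Y" unfolding y_def using Y PvY unfolding fincodim_subspace_def Pv_def by blast
    have yN: "N y = 1" unfolding y_def using hom Pvi \<mu>0 unfolding \<mu>_def by simp
    have yX: "y \<in> Xw p" using Y yY unfolding fincodim_subspace_def by blast
    have less: "N (vadd x (vscale t y)) < 1 + \<epsilon> * t" using Yb yY yN by force
    define T' where "T' = T(Suc j := \<tau> / \<mu>)"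
    have eqv: "emb J (tv T' (a(j:=b))) = vscale \<nu> (vadd x (vscale t y))"
    proof (intro ext)
      fix k s
      have ts: "tv T' (a(j:=b)) s = tv T a s + \<tau> / \<mu> * tv (\<lambda>i. if i = Suc j then 1 else 0) (a(j:=b)) s"
        unfolding T'_def by (rule tv_step[OF Tz])
      have "\<nu> * t = \<tau>" unfolding t_def using \<nu>0 by simp
      then have e: "\<nu> * (1 / \<nu> * A + t * (1 / \<mu> * B)) = A + \<tau> / \<mu> * B" for A B
        using \<nu>0 by (simp add: distrib_left mult.assoc[symmetric])
      have e2: "\<nu> * (A / \<nu> + t * B / \<mu>) = A + \<tau> * B / \<mu>" for A B
        using \<nu>0 \<open>\<nu> * t = \<tau>\<close> by (simp add: distrib_left mult.assoc[symmetric])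
      show "emb J (tv T' (a(j:=b))) k s = vscale \<nu> (vadd x (vscale t y)) k s"
        unfolding emb_def vscale_def vadd_def x_def y_def z_def Pv_def
        using e2 by (cases "k = J") (simp_all add: ts e)
    qed
    have vX: "vadd x (vscale t y) \<in> Xw p" using Xw_add[OF _ xX Xw_scale[OF p0 yX]] p by simp
    have "N (emb J (tv T' (a(j:=b)))) = \<nu> * N (vadd x (vscale t y))"
      unfolding eqv using hom vX \<nu>0 by simp
    also have "\<dots> \<le> \<nu> * (1 + \<epsilon> * t)" using less \<nu>0 by simp
    also have "\<dots> = \<nu> + \<epsilon> * \<tau>" unfolding t_def using \<nu>0 by (simp add: algebra_simps)
    also have "\<dots> \<le> C + real (Suc j) * \<epsilon> * \<tau>" using Nz unfolding \<nu>_def z_def by (simp add: algebra_simps)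
    finally have Nfin: "N (emb J (tv T' (a(j:=b)))) \<le> C + real (Suc j) * \<epsilon> * \<tau>" .
    have "\<tau> / C \<le> \<tau> / \<mu>" using \<mu>b \<mu>0 \<tau>0 by (intro divide_left_mono) auto
    then have T'b: "\<forall>i. 1 \<le> i \<and> i \<le> Suc j \<longrightarrow> \<tau> / C \<le> T' i"
      unfolding T'_def using Tb by (auto simp: le_Suc_eq)
    have "\<forall>i. 0 \<le> T' i" unfolding T'_def using Tn \<tau>0 \<mu>0 by simp
    moreover have "T' 0 = 1" "\<forall>i>Suc j. T' i = 0" unfolding T'_def using T0 Tz by auto
    ultimately show ?case unfolding P_def using an' T'b Nfin
      by (rule_tac x=T' in exI, rule_tac x="a(j:=b)" in exI) blast
  qed
  from step[of J] obtain T a where an: "\<forall>l. normd p (a l)" and T0: "T 0 = 1"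
      and Tz: "\<forall>i>J. T i = 0" and Tb: "\<forall>i. 1 \<le> i \<and> i \<le> J \<longrightarrow> \<tau> / C \<le> T i"
      and Nz: "N (emb J (tv T a)) \<le> C + real J * \<epsilon> * \<tau>"
    unfolding P_def by auto
  have zi: "emb J (tv T a) \<in> Xw p" "Xwnorm p (emb J (tv T a)) = (\<Sum>i\<le>J. \<bar>T i\<bar>)"
    using embinfo[OF an Tz] by auto
  have "(\<Sum>i\<le>J. if i = 0 then 1 else \<tau> / C) \<le> (\<Sum>i\<le>J. \<bar>T i\<bar>)"
  proof (intro sum_mono)
    fix i assume i: "i \<in> {..J}"
    show "(if i = 0 then 1 else \<tau> / C) \<le> \<bar>T i\<bar>"
    proof (cases "i = 0")
      case True then show ?thesis using T0 by simp
    next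
      case False
      then have "\<tau> / C \<le> T i" using Tb i by auto
      then show ?thesis using False by simp
    qed
  qed
  then have "1 + real J * (\<tau> / C) \<le> Xwnorm p (emb J (tv T a))" using zi sum_first_one by simp
  then have "c * (1 + real J * (\<tau> / C)) \<le> N (emb J (tv T a))"
    using cC zi(1) by (meson mult_left_mono less_imp_le order_trans)
  then have ineq: "c + real J * (c * \<tau> / C) \<le> C + real J * (c * \<tau> / (2 * C))"
    using Nz unfolding \<epsilon>_def by (simp add: algebra_simps)
  have "real J * (c * \<tau> / C) - real J * (c * \<tau> / (2 * C)) = real J * (c * \<tau>) / (2 * C)"
    using cC by (simp add: field_simps)
  with ineq have "real J * (c * \<tau>) / (2 * C) \<le> C - c" by linarith
  then have "real J * (c * \<tau>) \<le> (C - c) * (2 * C)" using cC by (simp add: divide_le_eq)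
  also have "\<dots> < 2 * C * C" using cC by (simp add: algebra_simps)
  finally have "real J < 2 * C * C / (\<tau> * c)" using cC \<tau>0 by (simp add: field_simps)
  then show False using Jbig by simp
qed

end
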